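(* Let $k\ge1$, work in $\mathbb{R}^{k+1}$ with standard basis $e_1,\dots,e_{k+1}$ (coordinates ordered as $(\mu_1,\dots,\mu_k,s)$), and for $i\ge1$ let \[ P_i=\mathrm{Conv}\Big(\{0\}\cup\{(i-2j)\,e_\ell+j\,e_{k+1}:\ \ell\in[k],\ 0\le j\le\lfloor i/2\rfloor\}\Big), \] the Newton polytope of $\sum_{\ell=1}^k\bar\lambda_\ell M_i(\mu_\ell,s)-\bar m_i$ for nonzero $\bar\lambda_\ell,\bar m_i$. Define line segments $Q_1=\mathrm{Conv}\{0,e_1\}$, $Q_2=\mathrm{Conv}\{0,e_{k+1}\}$, and $Q_i=\mathrm{Conv}\{0,\,i\,e_{i-1}\}$ for $3\le i\le k+1$. Then for every nonzero $w\in\mathbb{R}^{k+1}$ the set \[ \mathcal I_w=\{i\in[k+1]:\ Q_i\cap\mathrm{Init}_w(P_i)\neq\emptyset\} \] is nonempty.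
   Context: Define polynomials $M_i(\mu,s)$ for $i\ge 0$ by $M_0=1$, $M_1=\mu$, $M_i=\mu M_{i-1}+(i-1)\,s\,M_{i-2}$ for $i\ge2$. For $w\in\mathbb{R}^n$ and a convex polytope $P$, $\mathrm{Init}_w(P)=\{x\in P:\langle w,x\rangle\le\langle w,y\rangle\ \forall y\in P\}$ is the face where $\langle w,\cdot\rangle$ is minimized. *)

theory Defs
  imports Complex_Main
begin

text \<open>Points of R^(k+1) are represented as functions nat => real; coordinate j
  (0-based, j = 0..k) corresponds to the paper's basis vector e_(j+1).
  So e_l (l in [k]) is index l-1 and e_(k+1) (the s-coordinate) is index k.\<close>

definition ebasis :: "nat \<Rightarrow> nat \<Rightarrow> real" where
  "ebasis n = (\<lambda>j. if j = n then 1 else 0)"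

definition ipk :: "nat \<Rightarrow> (nat \<Rightarrow> real) \<Rightarrow> (nat \<Rightarrow> real) \<Rightarrow> real" where
  "ipk k w x = (\<Sum>j\<le>k. w j * x j)"

definition fconv :: "(nat \<Rightarrow> real) set \<Rightarrow> (nat \<Rightarrow> real) set" where
  "fconv S = {x. \<exists>F c. finite F \<and> F \<subseteq> S \<and> (\<forall>y\<in>F. 0 \<le> c y) \<and> sum c F = 1
                  \<and> x = (\<lambda>j. \<Sum>y\<in>F. c y * y j)}"

definition Init :: "nat \<Rightarrow> (nat \<Rightarrow> real) \<Rightarrow> (nat \<Rightarrow> real) set \<Rightarrow> (nat \<Rightarrow> real) set" where
  "Init k w P = {x \<in> P. \<forall>y\<in>P. ipk k w x \<le> ipk k w y}"

definition Ppoly :: "nat \<Rightarrow> nat \<Rightarrow> (nat \<Rightarrow> real) set" where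
  "Ppoly k i = fconv ({\<lambda>_. 0} \<union>
     {(\<lambda>t. (real i - 2 * real j) * ebasis (l - 1) t + real j * ebasis k t) | l j.
        l \<in> {1..k} \<and> j \<le> i div 2})"

definition Qseg :: "nat \<Rightarrow> nat \<Rightarrow> (nat \<Rightarrow> real) set" where
  "Qseg k i = (if i = 1 then fconv {\<lambda>_. 0, ebasis 0}
               else if i = 2 then fconv {\<lambda>_. 0, ebasis k}
               else fconv {\<lambda>_. 0, (\<lambda>t. real i * ebasis (i - 2) t)})"

end

theory Submission
  imports Defs
begin

lemma ipk_lin:
  assumes "p \<le> k" "q \<le> k" "p \<noteq> q"
  shows "ipk k w (\<lambda>t. a * ebasis p t + b * ebasis q t) = a * w p + b * w q"
proof -
  have "ipk k w (\<lambda>t. a * ebasis p t + b * ebasis q t)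
      = (\<Sum>j\<le>k. (if j = p then a * w p else 0)) + (\<Sum>j\<le>k. (if j = q then b * w q else 0))"
    unfolding ipk_def ebasis_def by (subst sum.distrib[symmetric], rule sum.cong, auto simp: algebra_simps)
  also have "\<dots> = a * w p + b * w q" using assms by simp
  finally show ?thesis .
qed

lemma ipk_e: "p \<le> k \<Longrightarrow> ipk k w (\<lambda>t. a * ebasis p t) = a * w p"
  unfolding ipk_def ebasis_def by (simp add: if_distrib cong: if_cong)

lemma ipk_e1: "p \<le> k \<Longrightarrow> ipk k w (ebasis p) = w p"
  unfolding ipk_def ebasis_def by (simp add: if_distrib cong: if_cong)

lemma ipk_0: "ipk k w (\<lambda>_. 0) = 0"
  unfolding ipk_def by simp

lemma in_fconv: "x \<in> S \<Longrightarrow> x \<in> fconv S"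
  unfolding fconv_def
  by (rule CollectI, rule exI[of _ "{x}"], rule exI[of _ "\<lambda>_. 1"]) auto

lemma fconv_bound:
  assumes "y \<in> fconv S" "\<forall>s\<in>S. a \<le> ipk k w s"
  shows "a \<le> ipk k w y"
proof -
  obtain F c where F: "finite F" "F \<subseteq> S" "\<forall>y\<in>F. 0 \<le> c y" "sum c F = 1"
    "y = (\<lambda>j. \<Sum>y\<in>F. c y * y j)" using assms(1) unfolding fconv_def by blast
  have "ipk k w y = (\<Sum>j\<le>k. \<Sum>v\<in>F. w j * (c v * v j))"
    unfolding ipk_def F(5) by (simp add: sum_distrib_left)
  also have "\<dots> = (\<Sum>v\<in>F. c v * ipk k w v)"
    unfolding ipk_def by (subst sum.swap) (simp add: sum_distrib_left algebra_simps)
  also have "\<dots> \<ge> (\<Sum>v\<in>F. c v * a)"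
    using F assms(2) by (intro sum_mono mult_left_mono) auto
  moreover have "(\<Sum>v\<in>F. c v * a) = a" using F(4) by (simp add: sum_distrib_right[symmetric])
  ultimately show ?thesis by simp
qed

lemma init_vertex:
  assumes "x \<in> S" "\<forall>y\<in>S. ipk k w x \<le> ipk k w y"
  shows "x \<in> Init k w (fconv S)"
  unfolding Init_def using assms in_fconv fconv_bound by blast

theorem mainTheorem8:
  fixes k :: nat and w :: "nat \<Rightarrow> real"
  assumes "k \<ge> 1"
    and "\<exists>j\<le>k. w j \<noteq> 0"
  shows "{i \<in> {1..k+1}. Qseg k i \<inter> Init k w (Ppoly k i) \<noteq> {}} \<noteq> {}"
proof -
  define V where "V i = ({\<lambda>_. 0::real} \<union>
     {(\<lambda>t. (real i - 2 * real j) * ebasis (l - 1) t + real j * ebasis k t) | l j.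
        l \<in> {1..k} \<and> j \<le> i div 2})" for i
  have vin: "(\<lambda>t. (real i - 2 * real j) * ebasis (l - 1) t + real j * ebasis k t) \<in> V i"
    if "l \<in> {1..k}" "j \<le> i div 2" for i j l unfolding V_def using that by blast
  have PV: "Ppoly k i = fconv (V i)" for i unfolding Ppoly_def V_def by simp
  define m where "m = Min (w ` {..<k})"
  have "m \<in> w ` {..<k}" unfolding m_def using assms(1) by (intro Min_in) (auto simp: lessThan_empty_iff)
  then obtain p where p: "p < k" "w p = m" by auto
  have mle: "\<And>l. l < k \<Longrightarrow> m \<le> w l" unfolding m_def by (intro Min_le) auto
  have vval: "\<exists>l j. l < k \<and> 2 * j \<le> i \<and> ipk k w v = (real i - 2 * real j) * w l + real j * w k"
    if vV: "v \<in> V i" "v \<noteq> (\<lambda>_. 0)" for v i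
  proof -
    obtain l j where lj: "l \<in> {1..k}" "j \<le> i div 2"
      "v = (\<lambda>t. (real i - 2 * real j) * ebasis (l - 1) t + real j * ebasis k t)"
      using vV unfolding V_def by blast
    show ?thesis using lj ipk_lin[of "l-1" k k w "real i - 2 * real j" "real j"]
      by (intro exI[of _ "l-1"] exI[of _ j]) auto
  qed
  have zQ: "(\<lambda>_. 0) \<in> Qseg k i" for i unfolding Qseg_def by (auto intro: in_fconv)
  show ?thesis
  proof (cases "w k \<le> 2 * min 0 m")
    case True
    have "ebasis k \<in> Init k w (fconv (V 2))"
    proof (rule init_vertex)
      have "ebasis k = (\<lambda>t. (real 2 - 2 * real 1) * ebasis (1 - 1) t + real 1 * ebasis k t)"
        by auto
      moreover have "(\<lambda>t. (real 2 - 2 * real 1) * ebasis (1 - 1) t + real 1 * ebasis k t) \<in> V 2"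
        by (rule vin) (use assms(1) in auto)
      ultimately show "ebasis k \<in> V 2" by simp
      show "\<forall>y\<in>V 2. ipk k w (ebasis k) \<le> ipk k w y"
      proof
        fix y assume y: "y \<in> V 2"
        show "ipk k w (ebasis k) \<le> ipk k w y"
        proof (cases "y = (\<lambda>_. 0)")
          case True then show ?thesis using \<open>w k \<le> 2 * min 0 m\<close> by (simp add: ipk_0 ipk_e1)
        next
          case False
          then obtain l j where lj: "l < k" "2 * j \<le> 2"
            "ipk k w y = (real 2 - 2 * real j) * w l + real j * w k" using vval y by blast
          have "j = 0 \<or> j = 1" using lj(2) by auto
          then show ?thesis using lj mle[OF lj(1)] \<open>w k \<le> 2 * min 0 m\<close> by (auto simp: ipk_e1)
        qed
      qed
    qed
    moreover have "ebasis k \<in> Qseg k 2" unfolding Qseg_def by (auto intro: in_fconv)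
    ultimately have "2 \<in> {i \<in> {1..k+1}. Qseg k i \<inter> Init k w (Ppoly k i) \<noteq> {}}"
      using assms(1) PV by auto
    then show ?thesis by blast
  next
    case False
    hence wk: "w k \<ge> 2 * min 0 m" by simp
    show ?thesis
    proof (cases "m \<ge> 0")
      case True
      have "(\<lambda>_. 0) \<in> Init k w (fconv (V 1))"
      proof (rule init_vertex)
        show "(\<lambda>_. 0) \<in> V 1" unfolding V_def by simp
        show "\<forall>y\<in>V 1. ipk k w (\<lambda>_. 0) \<le> ipk k w y"
        proof
          fix y assume y: "y \<in> V 1"
          show "ipk k w (\<lambda>_. 0) \<le> ipk k w y"
          proof (cases "y = (\<lambda>_. 0)")
            case True then show ?thesis by simp
          next
            case False
            then obtain l j where lj: "l < k" "2 * j \<le> 1"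
              "ipk k w y = (real 1 - 2 * real j) * w l + real j * w k" using vval y by blast
            have j0: "j = 0" using lj(2) by auto
            show ?thesis using lj(3) mle[OF lj(1)] True unfolding j0 by (simp add: ipk_0)
          qed
        qed
      qed
      hence "1 \<in> {i \<in> {1..k+1}. Qseg k i \<inter> Init k w (Ppoly k i) \<noteq> {}}"
        using zQ PV by auto
      then show ?thesis by blast
    next
      case False
      hence wk2: "w k \<ge> 2 * m" using wk by simp
      define i where "i = (if p = 0 then 1 else p + 2)"
      define x where "x = (if p = 0 then ebasis 0 else (\<lambda>t. real i * ebasis p t))"
      have ipkx: "ipk k w x = real i * m"
        using p by (auto simp: x_def i_def ipk_e ipk_e1)
      have xQ: "x \<in> Qseg k i" unfolding Qseg_def x_def i_def by (auto intro: in_fconv)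
      have "x \<in> Init k w (fconv (V i))"
      proof (rule init_vertex)
        have "x = (\<lambda>t. (real i - 2 * real 0) * ebasis (Suc p - 1) t + real 0 * ebasis k t)"
          unfolding x_def i_def by auto
        moreover have "(\<lambda>t. (real i - 2 * real 0) * ebasis (Suc p - 1) t + real 0 * ebasis k t) \<in> V i"
          by (rule vin) (use p in auto)
        ultimately show "x \<in> V i" by simp
        show "\<forall>y\<in>V i. ipk k w x \<le> ipk k w y"
        proof
          fix y assume y: "y \<in> V i"
          show "ipk k w x \<le> ipk k w y"
          proof (cases "y = (\<lambda>_. 0)")
            case True then show ?thesis using False ipkx by (simp add: ipk_0 mult_nonneg_nonpos)
          next
            case F: False
            then obtain l j where lj: "l < k" "2 * j \<le> i"
              "ipk k w y = (real i - 2 * real j) * w l + real j * w k" using vval y by blast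
            have a: "(real i - 2 * real j) * m \<le> (real i - 2 * real j) * w l"
              using lj mle[OF lj(1)] by (intro mult_left_mono) auto
            have b: "real j * (2 * m) \<le> real j * w k"
              using wk2 by (intro mult_left_mono) auto
            show ?thesis using a b lj(3) ipkx by (simp add: algebra_simps)
          qed
        qed
      qed
      moreover have "i \<in> {1..k+1}" using p unfolding i_def by auto
      ultimately have "i \<in> {i \<in> {1..k+1}. Qseg k i \<inter> Init k w (Ppoly k i) \<noteq> {}}"
        using xQ PV by auto
      then show ?thesis by blast
    qed
  qed
qed

end
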